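(* Let $C$ be the Klein quartic $\{X^3Y+Y^3Z+Z^3X=0\}\subset\mathbb{C}P^2$ with affine coordinates $x=X^3Y^{-2}Z^{-1}+1$, $y=-XY^{-1}$ (so $y^7=x(1-x)^2$). Let $(h_1,h_2,h_3,h_4)=(1/7,2/7,4/7,1/7)$, $B'_i=B(h_i,h_{i+1})$, $\omega_i=\omega'_i/B'_i$ ($i=1,2,3$) with $\omega'_1=(1-x)dx/y^6$, $\omega'_2=(1-x)dx/y^5$, $\omega'_3=dx/y^3$, let $e_0(t)=(t,\sqrt[7]{t(1-t)^2})$, $t\in[0,1]$ (real nonnegative root), and $x_{i,j}=\int_{e_0}\omega_i\omega_j$ (Chen iterated integral). Then for $i,j\in\{1,2,3\}$, $$x_{i,j}=\frac{B(h_i+h_j,h_{j+1})}{h_iB'_iB'_j}\lim_{t\to1^-,\ t\in\mathbb{R}}{}_3F_2\Big(\begin{matrix}h_i,\ 1-h_{i+1},\ h_i+h_j\\ 1+h_i,\ h_i+h_j+h_{j+1}\end{matrix};t\Big).$$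
   Context: $B$ is the beta function. Chen's iterated integral: if $\gamma^\ast a=f(t)dt$, $\gamma^\ast b=g(t)dt$ on $[0,1]$, then $\int_\gamma ab=\int_{0\le t_1\le t_2\le1}f(t_1)g(t_2)dt_1dt_2$. With $(\alpha,n)=\Gamma(\alpha+n)/\Gamma(\alpha)$, ${}_3F_2\big(\begin{smallmatrix}\alpha_1,\alpha_2,\alpha_3\\ \beta_1,\beta_2\end{smallmatrix};x\big)=\sum_{n\ge0}\frac{(\alpha_1,n)(\alpha_2,n)(\alpha_3,n)}{(\beta_1,n)(\beta_2,n)(1,n)}x^n$ for $|x|<1$. *)

theory Defs
  imports "HOL-Analysis.Analysis"
begin

definition hh :: "nat \<Rightarrow> real" where
  "hh i = (if i = 1 then 1/7 else if i = 2 then 2/7 else if i = 3 then 4/7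
           else if i = 4 then 1/7 else 0)"

definition Bp :: "nat \<Rightarrow> real" where
  "Bp i = Beta (hh i) (hh (i + 1))"

text \<open>Coefficient g_i(x,y) of the differential omega'_i = g_i(x,y) dx on the Klein quartic
  in the affine coordinates x, y (y^7 = x(1-x)^2):
  omega'_1 = (1-x)dx/y^6, omega'_2 = (1-x)dx/y^5, omega'_3 = dx/y^3.\<close>
definition omega_coeff :: "nat \<Rightarrow> real \<Rightarrow> real \<Rightarrow> real" where
  "omega_coeff i x y = (if i = 1 then (1 - x) / y ^ 6
                        else if i = 2 then (1 - x) / y ^ 5
                        else if i = 3 then 1 / y ^ 3 else 0)"

definition e0 :: "real \<Rightarrow> real \<times> real" where
  "e0 t = (t, root 7 (t * (1 - t) ^ 2))"

text \<open>Pullback of omega_i = omega'_i / B'_i along e_0: e_0^* omega_i = f_i(t) dt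
  (since x = t along e_0, dx = dt).\<close>
definition pullback_omega :: "nat \<Rightarrow> real \<Rightarrow> real" where
  "pullback_omega i t = omega_coeff i (fst (e0 t)) (snd (e0 t)) / Bp i"

definition chen_iter :: "(real \<Rightarrow> real) \<Rightarrow> (real \<Rightarrow> real) \<Rightarrow> real" where
  "chen_iter f g = (LINT p : {p :: real \<times> real. 0 \<le> fst p \<and> fst p \<le> snd p \<and> snd p \<le> 1} | lborel.
                      f (fst p) * g (snd p))"

definition xx :: "nat \<Rightarrow> nat \<Rightarrow> real" where
  "xx i j = chen_iter (pullback_omega i) (pullback_omega j)"

definition hyp3F2 :: "real \<Rightarrow> real \<Rightarrow> real \<Rightarrow> real \<Rightarrow> real \<Rightarrow> real \<Rightarrow> real" where
  "hyp3F2 a1 a2 a3 b1 b2 x =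
     (\<Sum>n. pochhammer a1 n * pochhammer a2 n * pochhammer a3 n /
           (pochhammer b1 n * pochhammer b2 n * pochhammer 1 n) * x ^ n)"

end

theory Submission
  imports Defs
begin

lemma abel_nonneg:
  fixes q :: "nat \<Rightarrow> real"
  assumes q0: "\<And>n. q n \<ge> 0" and qs: "summable q"
  shows "((\<lambda>t. \<Sum>n. q n * t^n) \<longlongrightarrow> (\<Sum>n. q n)) (at_left 1)"
proof -
  have ul: "uniform_limit {0..1} (\<lambda>n t. \<Sum>i<n. q i * t^i) (\<lambda>t. \<Sum>i. q i * t^i) sequentially"
  proof (rule Weierstrass_m_test[OF _ qs])
    fix n and t :: real assume "t \<in> {0..1}"
    then show "norm (q n * t^n) \<le> q n"
      using q0[of n] by (auto simp: abs_mult intro!: mult_left_le power_le_one)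
  qed
  have "continuous_on {0..1} (\<lambda>t. \<Sum>i. q i * t^i)"
    by (rule uniform_limit_theorem[OF _ ul]) (auto intro!: always_eventually continuous_intros)
  then have "((\<lambda>t. \<Sum>i. q i * t^i) \<longlongrightarrow> (\<Sum>i. q i * 1^i)) (at 1 within {0..1})"
    unfolding continuous_on_def by (metis atLeastAtMost_iff order.refl zero_le_one)
  then show ?thesis by (simp add: at_within_Icc_at_left)
qed

lemma not_nonpos_Int_pos: "(x::real) > 0 \<Longrightarrow> x \<notin> \<int>\<^sub>\<le>\<^sub>0"
  using nonpos_Ints_nonpos by fastforce

lemma Beta_shift:
  fixes x y :: real assumes "x > 0" "y > 0"
  shows "Beta (x + real n) y = Beta x y * pochhammer x n / pochhammer (x + y) n"
proof -
  have g1: "Gamma (x + real n) = pochhammer x n * Gamma x"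
    using pochhammer_Gamma[OF not_nonpos_Int_pos[OF assms(1)], of n] assms(1) Gamma_real_pos[OF assms(1)] by (simp add: field_simps)
  have gp: "Gamma (x+y) > 0" using assms by auto
  have g2: "Gamma (x + y + real n) = pochhammer (x+y) n * Gamma (x+y)"
    using pochhammer_Gamma[OF not_nonpos_Int_pos, of "x+y" n] assms gp by (simp add: field_simps)
  have "pochhammer (x+y) n > 0" using assms by (intro pochhammer_pos) auto
  moreover have "Gamma (x+y) > 0" using assms by auto
  ultimately show ?thesis unfolding Beta_def using g1 g2
    by (simp add: algebra_simps)
qed

lemma inv_shift:
  fixes a :: real assumes "a > 0"
  shows "1 / (a + real n) = pochhammer a n / (a * pochhammer (1 + a) n)"
proof -
  have "pochhammer a n * (a + real n) = a * pochhammer (a+1) n"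
    using pochhammer_Suc[of a n] pochhammer_rec[of a n] by simp
  moreover have "pochhammer (1+a) n > 0" using assms by (intro pochhammer_pos) auto
  moreover have "a + real n > 0" using assms by simp
  ultimately show ?thesis using assms by (simp add: field_simps)
qed


lemma binom_series:
  fixes t b :: real assumes "0 \<le> t" "t < 1"
  shows "(\<lambda>n. pochhammer (1-b) n / fact n * t^n) sums ((1-t) powr (b-1))"
proof -
  have "(\<lambda>n. ((b-1) gchoose n) * (-t)^n) sums ((1 + -t) powr (b-1))"
    by (rule gen_binomial_real) (use assms in auto)
  moreover have "((b-1) gchoose n) * (-t)^n = pochhammer (1-b) n / fact n * t^n" for n
  proof -
    have "((b-1) gchoose n) * (-t)^n = ((-1)^n * (-1)^n) * (pochhammer (1-b) n / fact n * t^n)"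
      unfolding gbinomial_pochhammer by (simp add: power_minus[of t] mult_ac)
    also have "(-1::real)^n * (-1)^n = 1" by (simp flip: power_add)
    finally show ?thesis by simp
  qed
  ultimately show ?thesis by simp
qed

lemma inner_int:
  fixes a b s :: real
  assumes a: "a > 0" and b: "b < 1" and s: "0 \<le> s" "s \<le> 1"
  shows "(\<integral>\<^sup>+t. ennreal (indicator {0..s} t * (t powr (a-1) * (1-t) powr (b-1))) \<partial>lborel)
     = (\<Sum>n. ennreal (pochhammer (1-b) n / fact n * (s powr (a + real n) / (a + real n))))"
proof -
  define p where "p n = pochhammer (1-b) n / fact n" for n
  have p0: "p n \<ge> 0" for n unfolding p_def using b by (intro divide_nonneg_pos pochhammer_nonneg) auto
  have "(\<integral>\<^sup>+t. ennreal (indicator {0..s} t * (t powr (a-1) * (1-t) powr (b-1))) \<partial>lborel)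
      = (\<integral>\<^sup>+t. (\<Sum>n. ennreal (indicator {0..s} t * (p n * t powr (a - 1 + real n)))) \<partial>lborel)"
  proof (rule nn_integral_cong_AE, rule eventually_mono[OF AE_lborel_singleton[of 1]])
    fix t :: real assume t1: "t \<noteq> 1"
    show "ennreal (indicator {0..s} t * (t powr (a-1) * (1-t) powr (b-1)))
       = (\<Sum>n. ennreal (indicator {0..s} t * (p n * t powr (a - 1 + real n))))"
    proof (cases "t \<in> {0..s}")
      case True
      then have t: "0 \<le> t" "t < 1" using t1 s by auto
      have "(\<lambda>n. t powr (a-1) * (p n * t^n)) sums (t powr (a-1) * (1-t) powr (b-1))"
        unfolding p_def by (intro sums_mult binom_series t)
      moreover have "t powr (a-1) * (p n * t^n) = p n * t powr (a - 1 + real n)" for n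
        using t by (cases "t = 0") (auto simp: powr_add powr_realpow)
      ultimately have sm: "(\<lambda>n. p n * t powr (a - 1 + real n)) sums (t powr (a-1) * (1-t) powr (b-1))"
        by simp
      have "(\<Sum>n. ennreal (p n * t powr (a - 1 + real n))) = ennreal (\<Sum>n. p n * t powr (a - 1 + real n))"
        using sm p0 by (intro suminf_ennreal2) (auto simp: sums_iff)
      then show ?thesis using True sm by (simp add: sums_iff)
    qed auto
  qed
  also have "\<dots> = (\<Sum>n. \<integral>\<^sup>+t. ennreal (indicator {0..s} t * (p n * t powr (a - 1 + real n))) \<partial>lborel)"
    by (rule nn_integral_suminf) measurable
  also have "\<dots> = (\<Sum>n. ennreal (p n * (s powr (a + real n) / (a + real n))))"
  proof (rule suminf_cong)
    fix n
    have "((\<lambda>t. t powr (a - 1 + real n)) has_integral (s powr (a - 1 + real n + 1) / (a - 1 + real n + 1))) {0..s}"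
      using a s by (intro has_integral_powr_from_0) auto
    then have "((\<lambda>t. p n * t powr (a - 1 + real n)) has_integral (p n * (s powr (a + real n) / (a + real n)))) {0..s}"
      by (intro has_integral_mult_right) simp
    from nn_integral_has_integral_lebesgue[OF _ this] p0[of n]
    show "(\<integral>\<^sup>+t. ennreal (indicator {0..s} t * (p n * t powr (a - 1 + real n))) \<partial>lborel) = ennreal (p n * (s powr (a + real n) / (a + real n)))"
      by simp
  qed
  finally show ?thesis by (simp add: p_def)
qed


lemma beta_nn:
  fixes a b :: real assumes "a > 0" "b > 0"
  shows "(\<integral>\<^sup>+t. ennreal (indicator {0..1} t * (t powr (a-1) * (1-t) powr (b-1))) \<partial>lborel) = ennreal (Beta a b)"
  using nn_integral_has_integral_lebesgue[OF _ has_integral_Beta_real[OF assms]] by simp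

lemma Beta_pos_real: "(x::real) > 0 \<Longrightarrow> y > 0 \<Longrightarrow> Beta x y > 0"
  unfolding Beta_def by (intro divide_pos_pos mult_pos_pos Gamma_real_pos) auto

lemma core:
  fixes a b c d :: real
  assumes a: "a > 0" and b: "b > 0" "b < 1" and c: "c > 0" and d: "d > 0"
  defines "S \<equiv> {p::real\<times>real. 0 \<le> fst p \<and> fst p \<le> snd p \<and> snd p \<le> 1}"
  defines "cc \<equiv> (\<lambda>n. pochhammer (1-b) n / fact n / (a + real n) * Beta (a+c+real n) d)"
  shows "summable cc \<and> (LINT p:S|lborel. (fst p powr (a-1) * (1-fst p) powr (b-1)) *
            (snd p powr (c-1) * (1 - snd p) powr (d-1))) = (\<Sum>n. cc n)"
proof -
  define f where "f t = t powr (a-1) * (1-t) powr (b-1)" for t :: real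
  define g where "g t = t powr (c-1) * (1-t) powr (d-1)" for t :: real
  define F where "F p = indicator S p * (f (fst p) * g (snd p))" for p :: "real \<times> real"
  have f0: "f t \<ge> 0" for t unfolding f_def by simp
  have g0: "g t \<ge> 0" for t unfolding g_def by simp
  have Sset: "S \<in> sets borel" unfolding S_def by (intro borel_closed closed_Collect_conj closed_Collect_le continuous_intros)
  have Sset': "S \<in> sets (lborel \<Otimes>\<^sub>M lborel)" by (metis Sset lborel_prod sets_lborel)
  have "F \<in> borel_measurable (lborel \<Otimes>\<^sub>M lborel)" unfolding F_def f_def g_def using Sset' by measurable
  then have Fm: "F \<in> borel_measurable lborel" by (simp add: lborel_prod)
  have "(LINT p:S|lborel. (fst p powr (a-1) * (1-fst p) powr (b-1)) *
            (snd p powr (c-1) * (1 - snd p) powr (d-1))) = integral\<^sup>L lborel F"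
    unfolding set_lebesgue_integral_def F_def f_def g_def by simp
  also have "\<dots> = enn2real (\<integral>\<^sup>+p. ennreal (F p) \<partial>lborel)"
    by (rule integral_eq_nn_integral[OF Fm]) (auto simp: F_def f0 g0)
  finally have L: "(LINT p:S|lborel. (fst p powr (a-1) * (1-fst p) powr (b-1)) *
            (snd p powr (c-1) * (1 - snd p) powr (d-1))) = enn2real (\<integral>\<^sup>+p. ennreal (F p) \<partial>lborel)" .
  have N: "(\<integral>\<^sup>+p. ennreal (F p) \<partial>lborel) = (\<integral>\<^sup>+t2. \<integral>\<^sup>+t1. ennreal (F (t1, t2)) \<partial>lborel \<partial>lborel)"
  proof -
    have "(\<lambda>p. ennreal (F p)) \<in> borel_measurable (lborel \<Otimes>\<^sub>M lborel)"
      using Fm by (simp add: lborel_prod)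
    from lborel_pair.nn_integral_snd[OF this] show ?thesis by (simp add: lborel_prod)
  qed
  have inner: "(\<integral>\<^sup>+t1. ennreal (F (t1, t2)) \<partial>lborel) =
      ennreal (indicator {0..1} t2 * g t2) * (\<integral>\<^sup>+t1. ennreal (indicator {0..t2} t1 * f t1) \<partial>lborel)" for t2
  proof -
    have "(\<integral>\<^sup>+t1. ennreal (F (t1, t2)) \<partial>lborel) =
       (\<integral>\<^sup>+t1. ennreal (indicator {0..1} t2 * g t2) * ennreal (indicator {0..t2} t1 * f t1) \<partial>lborel)"
      by (intro nn_integral_cong)
         (auto simp: F_def S_def indicator_def f0 g0 simp flip: ennreal_mult')
    also have "\<dots> = ennreal (indicator {0..1} t2 * g t2) * (\<integral>\<^sup>+t1. ennreal (indicator {0..t2} t1 * f t1) \<partial>lborel)"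
      by (rule nn_integral_cmult) (simp add: f_def)
    finally show ?thesis .
  qed
  have bound: "(\<integral>\<^sup>+p. ennreal (F p) \<partial>lborel) \<le> ennreal (Beta c d) * ennreal (Beta a b)"
  proof -
    have "(\<integral>\<^sup>+t2. \<integral>\<^sup>+t1. ennreal (F (t1, t2)) \<partial>lborel \<partial>lborel)
       \<le> (\<integral>\<^sup>+t2. ennreal (indicator {0..1} t2 * g t2) * ennreal (Beta a b) \<partial>lborel)"
    proof (rule nn_integral_mono)
      fix t2 :: real
      show "(\<integral>\<^sup>+t1. ennreal (F (t1, t2)) \<partial>lborel) \<le> ennreal (indicator {0..1} t2 * g t2) * ennreal (Beta a b)"
      proof (cases "t2 \<in> {0..1}")
        case True
        have "(\<integral>\<^sup>+t1. ennreal (indicator {0..t2} t1 * f t1) \<partial>lborel) \<le>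
              (\<integral>\<^sup>+t1. ennreal (indicator {0..1} t1 * f t1) \<partial>lborel)"
          using True by (intro nn_integral_mono) (auto simp: indicator_def f0)
        also have "\<dots> = ennreal (Beta a b)" unfolding f_def using a b by (intro beta_nn) auto
        finally show ?thesis unfolding inner by (intro mult_left_mono) auto
      qed (simp add: inner)
    qed
    also have "\<dots> = (\<integral>\<^sup>+t2. ennreal (indicator {0..1} t2 * g t2) \<partial>lborel) * ennreal (Beta a b)"
      by (rule nn_integral_multc) (simp add: g_def)
    also have "\<dots> = ennreal (Beta c d) * ennreal (Beta a b)"
      unfolding g_def using c d by (subst beta_nn) auto
    finally show ?thesis using N by simp
  qed
  then have fin: "(\<integral>\<^sup>+p. ennreal (F p) \<partial>lborel) \<noteq> top"
    by (metis ennreal_mult_eq_top_iff ennreal_neq_top neq_top_trans)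
  have cc0: "cc n \<ge> 0" for n
    unfolding cc_def using a b c d
    by (intro mult_nonneg_nonneg divide_nonneg_pos pochhammer_nonneg less_imp_le[OF Beta_pos_real]) auto
  define p where "p n = pochhammer (1-b) n / fact n" for n
  have p0: "p n \<ge> 0" for n unfolding p_def using b by (intro divide_nonneg_pos pochhammer_nonneg) auto
  have ser: "(\<integral>\<^sup>+p. ennreal (F p) \<partial>lborel) = (\<Sum>n. ennreal (cc n))"
  proof -
    have "(\<integral>\<^sup>+p. ennreal (F p) \<partial>lborel) = (\<integral>\<^sup>+t2. (\<Sum>n. ennreal (indicator {0..1} t2 *
           (p n / (a + real n) * (t2 powr (a + c + real n - 1) * (1-t2) powr (d-1))))) \<partial>lborel)"
      unfolding N
    proof (rule nn_integral_cong)
      fix t2 :: real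
      show "(\<integral>\<^sup>+t1. ennreal (F (t1, t2)) \<partial>lborel) = (\<Sum>n. ennreal (indicator {0..1} t2 *
           (p n / (a + real n) * (t2 powr (a + c + real n - 1) * (1-t2) powr (d-1)))))"
      proof (cases "t2 \<in> {0..1}")
        case True
        have "(\<integral>\<^sup>+t1. ennreal (F (t1, t2)) \<partial>lborel) = ennreal (g t2) *
           (\<Sum>n. ennreal (p n * (t2 powr (a + real n) / (a + real n))))"
          unfolding inner f_def p_def using True a b by (subst inner_int) auto
        also have "\<dots> = (\<Sum>n. ennreal (g t2) * ennreal (p n * (t2 powr (a + real n) / (a + real n))))"
          by simp
        also have "\<dots> = (\<Sum>n. ennreal (indicator {0..1} t2 *
           (p n / (a + real n) * (t2 powr (a + c + real n - 1) * (1-t2) powr (d-1)))))"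
        proof (rule suminf_cong)
          fix n
          have e: "g t2 * (p n * (t2 powr (a + real n) / (a + real n))) =
             p n / (a + real n) * (t2 powr (a + c + real n - 1) * (1-t2) powr (d-1))"
          proof (cases "t2 = 0")
            case False
            then have "t2 powr (c - 1) * t2 powr (a + real n) = t2 powr (a + c + real n - 1)"
              using True by (simp add: powr_add[symmetric] algebra_simps)
            then show ?thesis unfolding g_def by (simp add: field_simps)
          qed (simp add: g_def)
          show "ennreal (g t2) * ennreal (p n * (t2 powr (a + real n) / (a + real n))) =
             ennreal (indicator {0..1} t2 * (p n / (a + real n) * (t2 powr (a + c + real n - 1) * (1-t2) powr (d-1))))"
            using True by (simp only: ennreal_mult'[OF g0, symmetric] e) simp
        qed
        finally show ?thesis .
      qed (simp add: inner)
    qed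
    also have "\<dots> = (\<Sum>n. \<integral>\<^sup>+t2. ennreal (indicator {0..1} t2 *
           (p n / (a + real n) * (t2 powr (a + c + real n - 1) * (1-t2) powr (d-1)))) \<partial>lborel)"
      by (rule nn_integral_suminf) measurable
    also have "\<dots> = (\<Sum>n. ennreal (cc n))"
    proof (rule suminf_cong)
      fix n
      have "((\<lambda>t. t powr (a + c + real n - 1) * (1 - t) powr (d - 1)) has_integral Beta (a + c + real n) d) {0..1}"
        using a c d by (intro has_integral_Beta_real) auto
      then have "((\<lambda>t. p n / (a + real n) * (t powr (a + c + real n - 1) * (1 - t) powr (d - 1))) has_integral
                  (p n / (a + real n) * Beta (a + c + real n) d)) {0..1}"
        by (rule has_integral_mult_right)
      moreover have "0 \<le> p n / (a + real n) * (x powr (a + c + real n - 1) * (1 - x) powr (d - 1))" for x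
        using p0[of n] a by (intro mult_nonneg_nonneg divide_nonneg_pos) auto
      ultimately have "integral\<^sup>N lborel (\<lambda>x. indicator {0..1} x * (p n / (a + real n) * (x powr (a + c + real n - 1) * (1 - x) powr (d - 1)))) = p n / (a + real n) * Beta (a + c + real n) d"
        by (intro nn_integral_has_integral_lebesgue) auto
      then
      show "(\<integral>\<^sup>+t2. ennreal (indicator {0..1} t2 *
           (p n / (a + real n) * (t2 powr (a + c + real n - 1) * (1-t2) powr (d-1)))) \<partial>lborel) = ennreal (cc n)"
        by (simp add: cc_def p_def)
    qed
    finally show ?thesis .
  qed
  have sc: "summable cc"
    using fin ser cc0 by (intro summable_suminf_not_top) auto
  have "(\<integral>\<^sup>+p. ennreal (F p) \<partial>lborel) = ennreal (\<Sum>n. cc n)"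
    using ser suminf_ennreal2[OF cc0 sc] by simp
  then show ?thesis using L sc cc0 by (simp add: suminf_nonneg)
qed

lemma ypow:
  fixes t :: real assumes "0 < t" "t < 1"
  shows "(root 7 (t * (1-t)^2))^k = t powr (real k / 7) * (1-t) powr (2 * real k / 7)"
proof -
  have "root 7 (t * (1-t)^2) = (t * (1-t)^2) powr (1/7)"
    using root_powr_inverse[of 7 "t*(1-t)^2"] assms by simp
  also have "\<dots> = t powr (1/7) * ((1-t) powr 2) powr (1/7)"
    using assms by (simp add: powr_mult powr_realpow)
  also have "\<dots> = t powr (1/7) * (1-t) powr (2/7)" by (simp add: powr_powr)
  finally have "(root 7 (t * (1-t)^2))^k = (t powr (1/7))^k * ((1-t) powr (2/7))^k"
    by (simp add: power_mult_distrib)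
  also have "\<dots> = t powr (real k / 7) * (1-t) powr (2 * real k / 7)"
    using assms by (simp add: powr_power mult.commute)
  finally show ?thesis .
qed

lemma pullback_eq:
  assumes i: "i \<in> {1,2,3::nat}" and t: "0 \<le> t" "t \<le> 1"
  shows "pullback_omega i t = t powr (hh i - 1) * (1-t) powr (hh (i+1) - 1) / Bp i"
proof -
  consider "t = 0" | "t = 1" | "0 < t" "t < 1" using t by linarith
  then show ?thesis
  proof cases
    case 1 then show ?thesis using i by (auto simp: pullback_omega_def e0_def omega_coeff_def)
  next
    case 2 then show ?thesis using i by (auto simp: pullback_omega_def e0_def omega_coeff_def)
  next
    case 3
    have e: "x powr (-r) * x powr r = 1" if "x > 0" for x r :: real
      using that by (simp flip: powr_add)
    have e1: "(1-t) powr (-5/7) * (1-t) powr (12/7) = 1 - t" using 3 by (simp flip: powr_add)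
    have e2: "(1-t) powr (-3/7) * (1-t) powr (10/7) = 1 - t" using 3 by (simp flip: powr_add)
    have p1: "t powr (6/7) > 0" "(1-t) powr (12/7) > 0" "t powr (5/7) > 0" "(1-t) powr (10/7) > 0"
      "t powr (3/7) > 0" "(1-t) powr (6/7) > 0" using 3 by auto
    have aux: "N / D = R" if "D \<noteq> 0" "R * D = N" for N D R :: real
      using that by auto
    have q1: "(1 - t) / (t powr (6/7) * (1-t) powr (12/7)) = t powr (-6/7) * (1-t) powr (-5/7)"
    proof (rule aux)
      show "t powr (6/7) * (1-t) powr (12/7) \<noteq> 0" using p1 by simp
      have "t powr (-6/7) * (1-t) powr (-5/7) * (t powr (6/7) * (1-t) powr (12/7)) =
          (t powr (-(6/7)) * t powr (6/7)) * ((1-t) powr (-5/7) * (1-t) powr (12/7))" by (simp only: mult_ac) simp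
      also have "\<dots> = 1 - t" using e[of t "6/7"] e1 3 by simp
      finally show "t powr (-6/7) * (1-t) powr (-5/7) * (t powr (6/7) * (1-t) powr (12/7)) = 1 - t" .
    qed
    have q2: "(1 - t) / (t powr (5/7) * (1-t) powr (10/7)) = t powr (-5/7) * (1-t) powr (-3/7)"
    proof (rule aux)
      show "t powr (5/7) * (1-t) powr (10/7) \<noteq> 0" using p1 by simp
      have "t powr (-5/7) * (1-t) powr (-3/7) * (t powr (5/7) * (1-t) powr (10/7)) =
          (t powr (-(5/7)) * t powr (5/7)) * ((1-t) powr (-3/7) * (1-t) powr (10/7))" by (simp only: mult_ac) simp
      also have "\<dots> = 1 - t" using e[of t "5/7"] e2 3 by simp
      finally show "t powr (-5/7) * (1-t) powr (-3/7) * (t powr (5/7) * (1-t) powr (10/7)) = 1 - t" .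
    qed
    have q3: "1 / (t powr (3/7) * (1-t) powr (6/7)) = t powr (-3/7) * (1-t) powr (-6/7)"
    proof (rule aux)
      show "t powr (3/7) * (1-t) powr (6/7) \<noteq> 0" using p1 by simp
      have "t powr (-3/7) * (1-t) powr (-6/7) * (t powr (3/7) * (1-t) powr (6/7)) =
          (t powr (-(3/7)) * t powr (3/7)) * ((1-t) powr (-(6/7)) * (1-t) powr (6/7))" by (simp only: mult_ac) simp
      also have "\<dots> = 1" using e[of t "3/7"] e[of "1-t" "6/7"] 3 by simp
      finally show "t powr (-3/7) * (1-t) powr (-6/7) * (t powr (3/7) * (1-t) powr (6/7)) = 1" .
    qed
    show ?thesis using i 3 q1 q2 q3
      by (auto simp: pullback_omega_def e0_def omega_coeff_def ypow hh_def)
  qed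
qed


theorem lemma4p13:
  fixes i j :: nat
  assumes "i \<in> {1, 2, 3}" and "j \<in> {1, 2, 3}"
  shows "\<exists>L. ((\<lambda>t. hyp3F2 (hh i) (1 - hh (i + 1)) (hh i + hh j)
                         (1 + hh i) (hh i + hh j + hh (j + 1)) t) \<longlongrightarrow> L) (at_left 1)
            \<and> xx i j = Beta (hh i + hh j) (hh (j + 1)) / (hh i * Bp i * Bp j) * L"
proof -
  define a where "a = hh i"
  define b where "b = hh (i+1)"
  define c where "c = hh j"
  define d where "d = hh (j+1)"
  have a: "a > 0" and b: "b > 0" "b < 1" using assms(1) by (auto simp: a_def b_def hh_def)
  have c: "c > 0" and d: "d > 0" using assms(2) by (auto simp: c_def d_def hh_def)
  define S where "S = {p::real\<times>real. 0 \<le> fst p \<and> fst p \<le> snd p \<and> snd p \<le> 1}"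
  define cc where "cc = (\<lambda>n. pochhammer (1-b) n / fact n / (a + real n) * Beta (a+c+real n) d)"
  define q where "q = (\<lambda>n. pochhammer a n * pochhammer (1 - b) n * pochhammer (a + c) n /
           (pochhammer (1 + a) n * pochhammer (a + c + d) n * pochhammer 1 n))"
  define K where "K = Beta (a+c) d / a"
  have Bi: "Bp i = Beta a b" and Bj: "Bp j = Beta c d" by (simp_all add: Bp_def a_def b_def c_def d_def)
  have Bipos: "Bp i > 0" "Bp j > 0" using a b c d by (simp_all add: Bi Bj Beta_pos_real)
  have Kpos: "K > 0" unfolding K_def using a c d by (intro divide_pos_pos Beta_pos_real) auto
  from core[OF a b c d] have core': "summable cc \<and> (LINT p:S|lborel. (fst p powr (a-1) * (1-fst p) powr (b-1)) *
            (snd p powr (c-1) * (1 - snd p) powr (d-1))) = (\<Sum>n. cc n)"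
    unfolding S_def cc_def .
  have ccq: "cc n = K * q n" for n
  proof -
    have "cc n = pochhammer (1-b) n / fact n * (pochhammer a n / (a * pochhammer (1 + a) n)) *
             (Beta (a+c) d * pochhammer (a+c) n / pochhammer (a + c + d) n)"
      unfolding cc_def using inv_shift[OF a, of n] Beta_shift[of "a+c" d n] a c d
      by (simp add: divide_inverse)
    also have "\<dots> = K * q n" unfolding K_def q_def pochhammer_fact by (simp add: field_simps)
    finally show ?thesis .
  qed
  have q0: "q n \<ge> 0" for n unfolding q_def using a b c d
    by (intro divide_nonneg_pos mult_nonneg_nonneg mult_pos_pos pochhammer_nonneg pochhammer_pos) auto
  have qs: "summable q"
  proof -
    have "summable (\<lambda>n. cc n / K)" using core' by (intro summable_divide) auto
    then show ?thesis using Kpos by (simp add: ccq)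
  qed
  have SS: "S \<in> sets lborel" unfolding S_def
    by (simp only: sets_lborel) (intro borel_closed closed_Collect_conj closed_Collect_le continuous_intros)
  have "xx i j = (LINT p:S|lborel. ((fst p powr (a-1) * (1-fst p) powr (b-1)) *
            (snd p powr (c-1) * (1 - snd p) powr (d-1))) / (Bp i * Bp j))"
    unfolding xx_def chen_iter_def S_def[symmetric]
  proof (rule set_lebesgue_integral_cong[OF SS], intro allI impI)
    fix p assume "p \<in> S"
    then show "pullback_omega i (fst p) * pullback_omega j (snd p) = ((fst p powr (a-1) * (1-fst p) powr (b-1)) *
            (snd p powr (c-1) * (1 - snd p) powr (d-1))) / (Bp i * Bp j)"
      using assms by (simp add: S_def pullback_eq a_def b_def c_def d_def)
  qed
  also have "\<dots> = (\<Sum>n. cc n) / (Bp i * Bp j)" using core' by simp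
  also have "\<dots> = K * (\<Sum>n. q n) / (Bp i * Bp j)" unfolding ccq using qs by (simp add: suminf_mult)
  also have "\<dots> = Beta (hh i + hh j) (hh (j + 1)) / (hh i * Bp i * Bp j) * (\<Sum>n. q n)"
    unfolding K_def a_def c_def d_def by simp
  finally have X: "xx i j = Beta (hh i + hh j) (hh (j + 1)) / (hh i * Bp i * Bp j) * (\<Sum>n. q n)" .
  have "((\<lambda>t. \<Sum>n. q n * t^n) \<longlongrightarrow> (\<Sum>n. q n)) (at_left 1)" by (rule abel_nonneg[OF q0 qs])
  then have "((\<lambda>t. hyp3F2 (hh i) (1 - hh (i + 1)) (hh i + hh j)
                         (1 + hh i) (hh i + hh j + hh (j + 1)) t) \<longlongrightarrow> (\<Sum>n. q n)) (at_left 1)"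
    unfolding hyp3F2_def q_def a_def b_def c_def d_def .
  with X show ?thesis by blast
qed

end
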